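(* Let $a\in\mathbb{R}$ and $\lambda\in[0,1)$, and let $f_{a,\lambda}=h+\overline{g}$ be the generalized harmonic quasiconformal Koebe function, i.e. $h,g$ are analytic in the unit disk $\mathbb{D}$ with $h(0)=g(0)=0$ and $$h(z)-g(z)=k_a(z),\qquad \frac{g'(z)}{h'(z)}=\lambda z\quad(z\in\mathbb{D}).$$ Then $f_{a,\lambda}$ is univalent in $\mathbb{D}$ if and only if $-2\le a\le 2$.
   Context: $\mathbb{D}=\{z\in\mathbb{C}:|z|<1\}$. For $a\in\mathbb{R}\setminus\{0\}$ the generalized Koebe function is $k_a(z)=\frac{1}{2a}\left[\left(\frac{1+z}{1-z}\right)^a-1\right]$ (principal branch; $\frac{1+z}{1-z}$ lies in the right half-plane), and $k_0(z)=\frac12\log\frac{1+z}{1-z}$ (the limit $a\to0$). The system determines $h,g$ uniquely, and $h'(0)=1$, $g'(0)=0$. *)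

theory Defs
  imports "HOL-Complex_Analysis.Complex_Analysis"
begin

text \<open>Generalized Koebe function k_a (principal branch; complex powr is exp (w * Ln z)).\<close>
definition gen_koebe :: "real \<Rightarrow> complex \<Rightarrow> complex" where
  "gen_koebe a z =
     (if a = 0 then Ln ((1 + z) / (1 - z)) / 2
      else (((1 + z) / (1 - z)) powr (complex_of_real a) - 1) / (2 * complex_of_real a))"

end

theory Submission imports Defs begin


lemma re_cayley_pos:
  fixes w :: complex assumes "cmod w < 1"
  shows "Re ((1 + w) / (1 - w)) > 0"
proof -
  have ne: "1 - w \<noteq> 0" using assms by auto
  have "(Re w)^2 + (Im w)^2 < 1"
  proof -
    have "(cmod w)^2 < 1" using assms by (simp add: power_less_one_iff)
    then show ?thesis by (simp add: cmod_power2)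
  qed
  moreover have "Re ((1 + w) / (1 - w)) = (1 - (Re w)^2 - (Im w)^2) / ((1 - Re w)^2 + (Im w)^2)"
    by (simp add: Re_divide power2_eq_square algebra_simps)
  moreover have "(1 - Re w)^2 + (Im w)^2 > 0" using ne
    by (simp add: sum_power2_gt_zero_iff complex_eq_iff)
  ultimately show ?thesis by simp
qed

definition CC :: "complex \<Rightarrow> complex" where "CC v = (v - 1) / (v + 1)"
definition WW :: "complex \<Rightarrow> complex" where "WW z = (1 + z) / (1 - z)"

lemma WW_props: assumes "cmod z < 1" shows "Re (WW z) > 0" "WW z \<noteq> 0" "CC (WW z) = z" "WW z \<notin> \<real>\<^sub>\<le>\<^sub>0"
proof -
  show 1: "Re (WW z) > 0" using re_cayley_pos[OF assms] by (simp add: WW_def)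
  then show "WW z \<noteq> 0" by auto
  from 1 show "WW z \<notin> \<real>\<^sub>\<le>\<^sub>0" by (auto simp: complex_nonpos_Reals_iff)
  have ne: "1 - z \<noteq> 0" using assms by auto
  show "CC (WW z) = z" using ne unfolding CC_def WW_def
    by (simp add: field_simps)
qed

lemma CC_props: assumes "Re v > 0" shows "cmod (CC v) < 1" "WW (CC v) = v"
proof -
  have ne: "v + 1 \<noteq> 0" using assms by (auto simp: complex_eq_iff)
  have "(cmod (v - 1))^2 < (cmod (v + 1))^2" using assms
    by (simp only: cmod_power2) (simp add: power2_eq_square algebra_simps)
  then have "cmod (v - 1) < cmod (v + 1)" by (meson norm_ge_zero power_less_imp_less_base)
  then show "cmod (CC v) < 1" using ne by (simp add: CC_def norm_divide divide_less_eq)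
  have e1: "1 + CC v = 2 * v / (v + 1)" and e2: "1 - CC v = 2 / (v + 1)" using ne unfolding CC_def
    by (simp_all add: field_simps)
  show "WW (CC v) = v" using ne unfolding WW_def e1 e2 by simp
qed


lemma sector_upper:
  fixes u1 u2 :: complex and t c theta :: real
  assumes th: "0 < theta" "theta \<le> pi" and im: "Im u1 = c" "Im u2 = c" "c > 0"
    and ar: "Arg u1 < theta" "Arg u2 < theta" and t: "0 \<le> t" "t \<le> 1"
  shows "Arg (u1 + of_real t * (u2 - u1)) < theta"
proof -
  define Q where "Q u = Im u * cos theta - Re u * sin theta" for u
  have Qeq: "Q u = cmod u * sin (Arg u - theta)" if "Im u > 0" for u
  proof -
    have "u \<noteq> 0" using that by auto
    then have "Re u = cmod u * cos (Arg u)" "Im u = cmod u * sin (Arg u)"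
      by (simp_all add: cos_Arg sin_Arg)
    then show ?thesis unfolding Q_def sin_diff by (simp add: algebra_simps)
  qed
  have Qneg: "Q u < 0" if "Im u > 0" "Arg u < theta" for u
  proof -
    have "0 < Arg u" "Arg u < pi" using Arg_lt_pi that by auto
    then have "sin (theta - Arg u) > 0" using that th by (intro sin_gt_zero) auto
    then have "sin (Arg u - theta) < 0" by (metis minus_diff_eq neg_less_0_iff_less sin_minus)
    moreover have "cmod u > 0" using that by auto
    ultimately show ?thesis using Qeq[OF that(1)] by (simp add: mult_pos_neg)
  qed
  define u where "u = u1 + of_real t * (u2 - u1)"
  have imu: "Im u = c" using im by (simp add: u_def)
  have "Q u = (1 - t) * Q u1 + t * Q u2" unfolding Q_def u_def using im by (simp add: algebra_simps)
  also have "\<dots> < 0"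
  proof -
    have a: "Q u1 < 0" "Q u2 < 0" using Qneg im ar by auto
    show ?thesis
    proof (cases "t = 0")
      case True then show ?thesis using a by simp
    next
      case False
      then have "t * Q u2 < 0" using t a by (simp add: mult_pos_neg)
      moreover have "(1 - t) * Q u1 \<le> 0" using t a by (simp add: mult_nonneg_nonpos)
      ultimately show ?thesis by linarith
    qed
  qed
  finally have "cmod u * sin (Arg u - theta) < 0" using Qeq[of u] imu im by simp
  then have "sin (Arg u - theta) < 0" by (simp add: mult_less_0_iff)
  moreover have "0 < Arg u" "Arg u < pi" using Arg_lt_pi imu im by auto
  ultimately have "Arg u < theta" using th sin_ge_zero[of "Arg u - theta"] by force
  then show ?thesis by (simp add: u_def)
qed

lemma sector:
  fixes u1 u2 :: complex and t theta :: real
  assumes th: "0 < theta" "theta \<le> pi" and im: "Im u1 = Im u2" and nz: "u1 \<noteq> 0" "u2 \<noteq> 0"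
    and ar: "\<bar>Arg u1\<bar> < theta" "\<bar>Arg u2\<bar> < theta" and t: "0 \<le> t" "t \<le> 1"
  shows "u1 + of_real t * (u2 - u1) \<notin> \<real>\<^sub>\<le>\<^sub>0 \<and> \<bar>Arg (u1 + of_real t * (u2 - u1))\<bar> < theta"
proof -
  define u where "u = u1 + of_real t * (u2 - u1)"
  have imu: "Im u = Im u1" using im by (simp add: u_def)
  consider "Im u1 > 0" | "Im u1 < 0" | "Im u1 = 0" by linarith
  then have "u \<notin> \<real>\<^sub>\<le>\<^sub>0 \<and> \<bar>Arg u\<bar> < theta"
  proof cases
    case 1
    have p: "Arg u1 > 0" "Arg u2 > 0" "Arg u > 0" using 1 im imu Arg_lt_pi[of u1] Arg_lt_pi[of u2] Arg_lt_pi[of u] by auto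
    have "Arg u < theta" unfolding u_def
      by (rule sector_upper[OF th refl _ 1]) (use im ar p t in auto)
    moreover have "u \<notin> \<real>\<^sub>\<le>\<^sub>0" using 1 imu by (auto simp: complex_nonpos_Reals_iff)
    ultimately show ?thesis using p by auto
  next
    case 2
    have nr: "u1 \<notin> \<real>" "u2 \<notin> \<real>" "u \<notin> \<real>" using 2 im imu by (auto simp: complex_is_Real_iff)
    have c: "Arg (cnj u1) = - Arg u1" "Arg (cnj u2) = - Arg u2" "Arg (cnj u) = - Arg u"
      using nr by (auto simp: Arg_cnj)
    have p: "Arg (cnj u1) > 0" "Arg (cnj u2) > 0" "Arg (cnj u) > 0" using 2 im imu Arg_lt_pi[of "cnj u1"] Arg_lt_pi[of "cnj u2"] Arg_lt_pi[of "cnj u"] by auto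
    have "Arg (cnj u1 + of_real t * (cnj u2 - cnj u1)) < theta"
      by (rule sector_upper[OF th refl _ _ _ _ t]) (use im ar p c 2 in auto)
    moreover have "cnj u1 + of_real t * (cnj u2 - cnj u1) = cnj u" by (simp add: u_def)
    moreover have "u \<notin> \<real>\<^sub>\<le>\<^sub>0" using 2 imu by (auto simp: complex_nonpos_Reals_iff)
    ultimately show ?thesis using p c by auto
  next
    case 3
    have r: "u1 \<in> \<real>" "u2 \<in> \<real>" using 3 im by (auto simp: complex_is_Real_iff)
    have "Re u1 \<ge> 0" "Re u2 \<ge> 0"
      using Arg_real[OF r(1)] Arg_real[OF r(2)] ar th by (auto split: if_splits)
    then have "Re u1 > 0" "Re u2 > 0" using nz 3 im by (auto simp: complex_eq_iff)
    then have "(1 - t) * Re u1 + t * Re u2 > 0" using t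
      by (cases "t = 0") (auto intro: add_nonneg_pos)
    moreover have "Re u = (1 - t) * Re u1 + t * Re u2" by (simp add: u_def algebra_simps)
    ultimately have "Re u > 0" by linarith
    moreover have "u \<in> \<real>" using 3 imu by (simp add: complex_is_Real_iff)
    ultimately show ?thesis using th by (auto simp: complex_nonpos_Reals_iff Arg_real)
  qed
  then show ?thesis by (simp add: u_def)
qed


lemma Re_mult_ofreal: "Re (complex_of_real r * z) = r * Re z" by simp

lemma shear:
  fixes lambda :: real and h g :: "complex \<Rightarrow> complex"
  assumes lam: "0 \<le> lambda" "lambda < 1"
    and hol: "h holomorphic_on ball 0 1" "g holomorphic_on ball 0 1"
    and dil: "\<forall>z\<in>ball 0 1. deriv g z = complex_of_real lambda * z * deriv h z"
    and inj: "inj_on (\<lambda>z. h z - g z) (ball 0 1)"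
    and path: "\<And>z1 z2. z1 \<in> ball 0 1 \<Longrightarrow> z2 \<in> ball 0 1 \<Longrightarrow> Im (h z1 - g z1) = Im (h z2 - g z2) \<Longrightarrow>
       \<exists>\<gamma>. (\<forall>t\<in>{0..1}. \<gamma> t \<in> ball 0 1 \<and> \<gamma> differentiable (at t) \<and>
              h (\<gamma> t) - g (\<gamma> t) = (h z1 - g z1) + of_real t * ((h z2 - g z2) - (h z1 - g z1)))
            \<and> \<gamma> 0 = z1 \<and> \<gamma> 1 = z2"
  shows "inj_on (\<lambda>z. h z + cnj (g z)) (ball 0 1)"
proof (rule inj_onI, rule ccontr)
  fix z1 z2 assume z1: "z1 \<in> ball 0 1" and z2: "z2 \<in> ball 0 1"
    and eq: "h z1 + cnj (g z1) = h z2 + cnj (g z2)" and ne: "z1 \<noteq> z2"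
  define d where "d = (h z2 - g z2) - (h z1 - g z1)"
  have imeq: "Im (h z1 - g z1) = Im (h z2 - g z2)" using arg_cong[OF eq, of Im] by simp
  have reeq: "Re (h z1) + Re (g z1) = Re (h z2) + Re (g z2)" using arg_cong[OF eq, of Re] by simp
  have dnz: "d \<noteq> 0" using inj z1 z2 ne unfolding d_def inj_on_def by auto
  have dreal: "Im d = 0" using imeq by (simp add: d_def)
  obtain \<gamma> where gp: "\<forall>t\<in>{0..1}. \<gamma> t \<in> ball 0 1 \<and> \<gamma> differentiable (at t) \<and>
              h (\<gamma> t) - g (\<gamma> t) = (h z1 - g z1) + of_real t * d"
    and g0: "\<gamma> 0 = z1" and g1: "\<gamma> 1 = z2"
    using path[OF z1 z2 imeq] unfolding d_def by blast
  define R where "R t = Re (h (\<gamma> t)) + Re (g (\<gamma> t))" for t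
  have hd: "(h has_field_derivative deriv h z) (at z)" "(g has_field_derivative deriv g z) (at z)"
    if "z \<in> ball 0 1" for z
    using holomorphic_derivI[OF hol(1) open_ball that] holomorphic_derivI[OF hol(2) open_ball that] by auto
  have cont: "continuous_on {0..1} R"
  proof (intro continuous_at_imp_continuous_on ballI)
    fix t :: real assume t: "t \<in> {0..1}"
    then have "isCont \<gamma> t" using gp differentiable_imp_continuous_within by blast
    moreover have "isCont h (\<gamma> t)" "isCont g (\<gamma> t)" using hd gp t
      by (meson DERIV_isCont)+
    ultimately show "isCont R t" unfolding R_def
      by (intro continuous_intros) (auto intro: continuous_at_compose[unfolded o_def])
  qed
  have "R 0 = R 1" using reeq g0 g1 by (simp add: R_def)
  have derR: "\<exists>D. (R has_real_derivative D) (at t) \<and> (\<forall>D'. (R has_real_derivative D') (at t) \<longrightarrow> D' = D) \<and>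
     (D = 0 \<longrightarrow> False)" if t: "0 < t" "t < 1" for t
  proof -
    have tt: "t \<in> {0..1}" using t by auto
    define z where "z = \<gamma> t"
    have zb: "z \<in> ball 0 1" using gp tt by (simp add: z_def)
    obtain G where G: "(\<gamma> has_vector_derivative G) (at t)"
      using gp tt vector_derivative_works by blast
    have Hh: "((h \<circ> \<gamma>) has_vector_derivative G * deriv h z) (at t)"
      by (rule field_vector_diff_chain_at[OF G]) (use hd zb z_def in auto)
    have Hg: "((g \<circ> \<gamma>) has_vector_derivative G * deriv g z) (at t)"
      by (rule field_vector_diff_chain_at[OF G]) (use hd zb z_def in auto)
    have DR: "(R has_real_derivative (Re (G * deriv h z) + Re (G * deriv g z))) (at t)"
      unfolding R_def using DERIV_add[OF has_field_derivative_Re[OF Hh] has_field_derivative_Re[OF Hg]]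
      by (simp add: o_def)
    have Hk: "((\<lambda>s. h (\<gamma> s) - g (\<gamma> s)) has_vector_derivative G * deriv h z - G * deriv g z) (at t)"
      using has_vector_derivative_diff[OF Hh Hg] by (simp add: o_def)
    have Hk2: "((\<lambda>s. (h z1 - g z1) + of_real s * d) has_vector_derivative G * deriv h z - G * deriv g z) (at t)"
      by (rule has_vector_derivative_transform_within_open[OF Hk, of "{0<..<1}"]) (use t gp in auto)
    have Hk3: "((\<lambda>s. (h z1 - g z1) + of_real s * d) has_vector_derivative d) (at t)"
      by (auto intro!: derivative_eq_intros simp: has_vector_derivative_def scaleR_conv_of_real)
    have kd: "G * deriv h z - G * deriv g z = d" using vector_derivative_unique_at[OF Hk2 Hk3] .
    define w where "w = complex_of_real lambda * z"
    have "lambda * cmod z \<le> cmod z" using lam by (simp add: mult_left_le_one_le)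
    then have wl: "cmod w < 1" using zb lam by (simp add: w_def norm_mult)
    then have w1: "1 - w \<noteq> 0" by auto
    have gz: "deriv g z = w * deriv h z" using dil zb by (simp add: w_def)
    have "G * deriv h z * (1 - w) = G * deriv h z - G * deriv g z" unfolding gz by (simp add: algebra_simps)
    then have "G * deriv h z * (1 - w) = d" using kd by simp
    then have A: "G * deriv h z = d / (1 - w)" using w1 by (simp add: eq_divide_eq)
    have dd: "d = of_real (Re d)" using dreal by (simp add: complex_eq_iff)
    have "Re (G * deriv h z) + Re (G * deriv g z) = Re ((G * deriv h z) * (1 + w))"
      using gz by (simp add: algebra_simps)
    also have "(G * deriv h z) * (1 + w) = complex_of_real (Re d) * ((1 + w) / (1 - w))"
      unfolding A by (subst dd[symmetric]) simp
    also have "Re \<dots> = Re d * Re ((1 + w) / (1 - w))" by (simp only: Re_mult_ofreal)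
    finally have eqD: "Re (G * deriv h z) + Re (G * deriv g z) = Re d * Re ((1 + w) / (1 - w))" .
    have "Re d \<noteq> 0" using dnz dd by auto
    moreover have "Re ((1 + w) / (1 - w)) > 0" using re_cayley_pos[OF wl] .
    ultimately have "Re (G * deriv h z) + Re (G * deriv g z) \<noteq> 0" using eqD by simp
    then show ?thesis using DR DERIV_unique by blast
  qed
  obtain c where c: "0 < c" "c < 1" "(R has_real_derivative 0) (at c)"
  proof -
    have "\<exists>c. 0 < c \<and> c < 1 \<and> DERIV R c :> 0"
    proof (rule Rolle[OF _ \<open>R 0 = R 1\<close> cont])
      fix x :: real assume "0 < x" "x < 1"
      then show "R differentiable (at x)" using derR real_differentiable_def by blast
    qed simp
    then show ?thesis using that by blast
  qed
  then show False using derR[OF c(1,2)] by blast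
qed


definition EE :: "real \<Rightarrow> complex \<Rightarrow> complex" where
  "EE a s = (if a = 0 then s / 2 else (exp (complex_of_real a * s) - 1) / (2 * complex_of_real a))"
definition EI :: "real \<Rightarrow> complex \<Rightarrow> complex" where
  "EI a q = (if a = 0 then 2 * q else Ln (1 + 2 * complex_of_real a * q) / complex_of_real a)"

lemma koebe_EE: assumes "cmod z < 1" shows "gen_koebe a z = EE a (Ln (WW z))"
  using WW_props(2)[OF assms] unfolding gen_koebe_def EE_def WW_def powr_def
  by (simp add: mult.commute)

lemma Im_mult_ofreal: "Im (complex_of_real r * z) = r * Im z" by simp

lemma EI_EE: assumes "\<bar>Im s\<bar> < pi/2" "\<bar>a\<bar> \<le> 2" shows "EI a (EE a s) = s"
proof (cases "a = 0")
  case True then show ?thesis by (simp add: EI_def EE_def)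
next
  case False
  have "\<bar>a * Im s\<bar> < pi" using assms False
  proof -
    have "\<bar>a * Im s\<bar> = \<bar>a\<bar> * \<bar>Im s\<bar>" by (simp add: abs_mult)
    also have "\<dots> \<le> 2 * \<bar>Im s\<bar>" using assms by (simp add: mult_right_mono)
    also have "\<dots> < pi" using assms by simp
    finally show ?thesis .
  qed
  then have "Ln (exp (complex_of_real a * s)) = complex_of_real a * s"
    by (intro Ln_exp) (auto simp: Im_mult_ofreal)
  moreover have "1 + 2 * complex_of_real a * ((exp (complex_of_real a * s) - 1) / (2 * complex_of_real a))
     = exp (complex_of_real a * s)" using False by (simp add: field_simps)
  ultimately show ?thesis using False by (simp add: EI_def EE_def)
qed

lemma EI_path:
  fixes a t :: real
  assumes a: "\<bar>a\<bar> \<le> 2" and s: "\<bar>Im s1\<bar> < pi/2" "\<bar>Im s2\<bar> < pi/2"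
    and im: "Im (EE a s1) = Im (EE a s2)" and t: "0 \<le> t" "t \<le> 1"
  defines "q \<equiv> EE a s1 + of_real t * (EE a s2 - EE a s1)"
  shows "\<bar>Im (EI a q)\<bar> < pi/2 \<and> EE a (EI a q) = q \<and> EI a field_differentiable (at q)"
proof (cases "a = 0")
  case True
  have "Im q = Im (EE a s1)" using im by (simp add: q_def)
  then have "Im (EI a q) = Im s1" using True by (simp add: EI_def EE_def)
  then show ?thesis using True s by (simp add: EI_def EE_def EI_def[abs_def] field_differentiable_def)
      (auto intro!: derivative_eq_intros)
next
  case False
  define u1 where "u1 = exp (complex_of_real a * s1)"
  define u2 where "u2 = exp (complex_of_real a * s2)"
  have eu1: "1 + 2 * complex_of_real a * EE a s1 = u1" and eu2: "1 + 2 * complex_of_real a * EE a s2 = u2"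
    using False by (simp_all add: EE_def u1_def u2_def field_simps)
  define u where "u = 1 + 2 * complex_of_real a * q"
  have ueq: "u = u1 + of_real t * (u2 - u1)" unfolding u_def q_def eu1[symmetric] eu2[symmetric]
    by (simp add: algebra_simps)
  have imu: "Im u1 = Im u2" using im unfolding eu1[symmetric] eu2[symmetric] by simp
  define theta where "theta = \<bar>a\<bar> * pi / 2"
  have th: "0 < theta" "theta \<le> pi" using False a by (auto simp: theta_def)
  have argu: "\<bar>Arg (exp (complex_of_real a * s))\<bar> < theta" if "\<bar>Im s\<bar> < pi/2" for s
  proof -
    have "\<bar>a * Im s\<bar> = \<bar>a\<bar> * \<bar>Im s\<bar>" by (simp add: abs_mult)
    also have "\<dots> < \<bar>a\<bar> * (pi/2)" using that False by simp
    finally have lt: "\<bar>a * Im s\<bar> < theta" by (simp add: theta_def)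
    then have "-pi < a * Im s" "a * Im s \<le> pi" using th by auto
    then have "Arg (exp (complex_of_real a * s)) = a * Im s" by (simp add: Arg_exp Im_mult_ofreal)
    then show ?thesis using lt by simp
  qed
  have sec: "u \<notin> \<real>\<^sub>\<le>\<^sub>0 \<and> \<bar>Arg u\<bar> < theta" unfolding ueq
    by (rule sector[OF th imu _ _ _ _ t]) (use argu s in \<open>auto simp: u1_def u2_def\<close>)
  have unz: "u \<noteq> 0" using sec by auto
  have EIq: "EI a q = Ln u / complex_of_real a" using False by (simp add: EI_def u_def)
  have "Im (EI a q) = Arg u / a" unfolding EIq using unz by (simp add: Arg_eq_Im_Ln Im_divide_of_real)
  then have "\<bar>Im (EI a q)\<bar> = \<bar>Arg u\<bar> / \<bar>a\<bar>" by simp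
  also have "\<dots> < theta / \<bar>a\<bar>" using sec False by (simp add: divide_strict_right_mono)
  also have "\<dots> = pi/2" using False by (simp add: theta_def)
  finally have 1: "\<bar>Im (EI a q)\<bar> < pi/2" .
  have "EE a (EI a q) = (exp (Ln u) - 1) / (2 * complex_of_real a)"
    using False unfolding EIq EE_def by simp
  also have "\<dots> = q" using unz False by (simp add: u_def field_simps)
  finally have 2: "EE a (EI a q) = q" .
  have "((\<lambda>x. Ln (1 + 2 * complex_of_real a * x) / complex_of_real a) has_field_derivative
          (inverse u * (2 * complex_of_real a)) / complex_of_real a) (at q)"
  proof -
    have d1: "((\<lambda>x. 1 + 2 * complex_of_real a * x) has_field_derivative 2 * complex_of_real a) (at q)"
      by (auto intro!: derivative_eq_intros)
    have lu: "(Ln has_field_derivative inverse u) (at (1 + 2 * complex_of_real a * q))"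
      using has_field_derivative_Ln[of u] sec by (simp add: u_def)
    show ?thesis using DERIV_cdivide[OF DERIV_chain2[OF lu d1], of "complex_of_real a"] by simp
  qed
  then have 3: "EI a field_differentiable (at q)" using False
    unfolding field_differentiable_def EI_def[abs_def] by auto
  show ?thesis using 1 2 3 by blast
qed


lemma CC_diff: "Re v > 0 \<Longrightarrow> CC field_differentiable (at v)"
  unfolding CC_def[abs_def]
  by (intro field_differentiable_divide field_differentiable_diff field_differentiable_add
        field_differentiable_const field_differentiable_ident) (auto simp: complex_eq_iff)

lemma koebe_univalent:
  fixes a lambda :: real and h g :: "complex \<Rightarrow> complex"
  assumes a: "\<bar>a\<bar> \<le> 2" and lam: "0 \<le> lambda" "lambda < 1"
    and hol: "h holomorphic_on ball 0 1" "g holomorphic_on ball 0 1"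
    and hk: "\<forall>z\<in>ball 0 1. h z - g z = gen_koebe a z"
    and dil: "\<forall>z\<in>ball 0 1. deriv g z = complex_of_real lambda * z * deriv h z"
  shows "inj_on (\<lambda>z. h z + cnj (g z)) (ball 0 1)"
proof (rule shear[OF lam hol dil])
  have sb: "\<bar>Im (Ln (WW z))\<bar> < pi/2" if "z \<in> ball 0 1" for z
    using Re_Ln_pos_lt_imp WW_props(1) that by auto
  have kz: "h z - g z = EE a (Ln (WW z))" if "z \<in> ball 0 1" for z
    using hk koebe_EE that by auto
  show "inj_on (\<lambda>z. h z - g z) (ball 0 1)"
  proof (rule inj_onI)
    fix z1 z2 assume z: "z1 \<in> ball 0 1" "z2 \<in> ball 0 1" and e: "h z1 - g z1 = h z2 - g z2"
    then have "EI a (EE a (Ln (WW z1))) = EI a (EE a (Ln (WW z2)))" using kz by simp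
    then have "Ln (WW z1) = Ln (WW z2)" using EI_EE[OF sb[OF z(1)] a] EI_EE[OF sb[OF z(2)] a] by simp
    have zc: "cmod z1 < 1" "cmod z2 < 1" using z by auto
    have "WW z1 = exp (Ln (WW z1))" using WW_props(2)[OF zc(1)] by simp
    also have "\<dots> = exp (Ln (WW z2))" using \<open>Ln (WW z1) = Ln (WW z2)\<close> by simp
    also have "\<dots> = WW z2" using WW_props(2)[OF zc(2)] by simp
    finally have "WW z1 = WW z2" .
    then show "z1 = z2" using WW_props(3)[OF zc(1)] WW_props(3)[OF zc(2)] by metis
  qed
  fix z1 z2 assume z: "z1 \<in> ball 0 1" "z2 \<in> ball 0 1" and ime: "Im (h z1 - g z1) = Im (h z2 - g z2)"
  define s1 where "s1 = Ln (WW z1)"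
  define s2 where "s2 = Ln (WW z2)"
  have s: "\<bar>Im s1\<bar> < pi/2" "\<bar>Im s2\<bar> < pi/2" using sb z by (auto simp: s1_def s2_def)
  have k1: "h z1 - g z1 = EE a s1" and k2: "h z2 - g z2 = EE a s2" using kz z by (auto simp: s1_def s2_def)
  have im: "Im (EE a s1) = Im (EE a s2)" using ime k1 k2 by simp
  define d where "d = EE a s2 - EE a s1"
  define \<gamma> where "\<gamma> t = CC (exp (EI a (EE a s1 + of_real t * d)))" for t :: real
  have main: "\<gamma> t \<in> ball 0 1 \<and> \<gamma> differentiable (at t) \<and>
              h (\<gamma> t) - g (\<gamma> t) = (h z1 - g z1) + of_real t * ((h z2 - g z2) - (h z1 - g z1))"
    if t: "t \<in> {0..1}" for t
  proof -
    define q where "q = EE a s1 + of_real t * d"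
    have P: "\<bar>Im (EI a q)\<bar> < pi/2 \<and> EE a (EI a q) = q \<and> EI a field_differentiable (at q)"
      using EI_path[OF a s im, of t] t by (simp add: q_def d_def)
    define v where "v = exp (EI a q)"
    have "cos (Im (EI a q)) > 0" using P by (intro cos_gt_zero_pi) auto
    then have vp: "Re v > 0" unfolding v_def Re_exp by simp
    have gt: "\<gamma> t = CC v" by (simp add: \<gamma>_def v_def q_def)
    have inb: "\<gamma> t \<in> ball 0 1" using CC_props(1)[OF vp] gt by simp
    have "Ln v = EI a q" unfolding v_def using P by (intro Ln_exp) auto
    then have "h (\<gamma> t) - g (\<gamma> t) = q" using kz[OF inb] CC_props(2)[OF vp] gt P by simp
    then have eqn: "h (\<gamma> t) - g (\<gamma> t) = (h z1 - g z1) + of_real t * ((h z2 - g z2) - (h z1 - g z1))"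
      by (simp add: q_def d_def k1 k2)
    define F1 where "F1 x = EE a s1 + x * d" for x :: complex
    have f1: "F1 field_differentiable (at (of_real t))" unfolding F1_def[abs_def]
      by (intro derivative_intros)
    have f2: "(EI a \<circ> F1) field_differentiable (at (of_real t))"
      by (rule field_differentiable_compose[OF f1]) (use P in \<open>simp add: F1_def q_def\<close>)
    have f3: "(exp \<circ> (EI a \<circ> F1)) field_differentiable (at (of_real t))"
      by (rule field_differentiable_compose[OF f2]) (simp add: field_differentiable_within_exp)
    have f4: "(CC \<circ> (exp \<circ> (EI a \<circ> F1))) field_differentiable (at (of_real t))"
      by (rule field_differentiable_compose[OF f3]) (use vp CC_diff in \<open>simp add: v_def F1_def q_def\<close>)
    then obtain D where D: "((CC \<circ> (exp \<circ> (EI a \<circ> F1))) has_field_derivative D) (at (of_real t))"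
      unfolding field_differentiable_def by blast
    have "((\<lambda>x. (CC \<circ> (exp \<circ> (EI a \<circ> F1))) (of_real x)) has_vector_derivative D) (at t)"
      using has_vector_derivative_real_field[OF D] .
    moreover have "(\<lambda>x. (CC \<circ> (exp \<circ> (EI a \<circ> F1))) (of_real x)) = \<gamma>"
      by (simp add: \<gamma>_def F1_def fun_eq_iff)
    ultimately have "\<gamma> differentiable (at t)" using differentiableI_vector by metis
    then show ?thesis using inb eqn by blast
  qed
  have "\<gamma> 0 = z1" using EI_EE[OF s(1) a] WW_props(2,3) z(1)
    by (simp add: \<gamma>_def s1_def exp_Ln)
  moreover have "\<gamma> 1 = z2" using EI_EE[OF s(2) a] WW_props(2,3) z(2)
    by (simp add: \<gamma>_def d_def s2_def exp_Ln)
  ultimately show "\<exists>\<gamma>. (\<forall>t\<in>{0..1}. \<gamma> t \<in> ball 0 1 \<and> \<gamma> differentiable (at t) \<and>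
              h (\<gamma> t) - g (\<gamma> t) = (h z1 - g z1) + of_real t * ((h z2 - g z2) - (h z1 - g z1)))
            \<and> \<gamma> 0 = z1 \<and> \<gamma> 1 = z2" using main by blast
qed


lemma koebe_sym: assumes "cmod z < 1" shows "gen_koebe a (cnj z) = cnj (gen_koebe a z)"
proof -
  have c: "cmod (cnj z) < 1" using assms by simp
  have "WW (cnj z) = cnj (WW z)" by (simp add: WW_def)
  then have "Ln (WW (cnj z)) = cnj (Ln (WW z))" using cnj_Ln[OF WW_props(4)[OF assms]] by simp
  then show ?thesis unfolding koebe_EE[OF assms] koebe_EE[OF c] EE_def
    by (simp add: exp_cnj)
qed

lemma hg_sym:
  fixes lambda :: real and h g :: "complex \<Rightarrow> complex"
  assumes lam: "0 \<le> lambda" "lambda < 1"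
    and hol: "h holomorphic_on ball 0 1" "g holomorphic_on ball 0 1"
    and h0: "h 0 = 0"
    and hk: "\<forall>z\<in>ball 0 1. h z - g z = gen_koebe a z"
    and dil: "\<forall>z\<in>ball 0 1. deriv g z = complex_of_real lambda * z * deriv h z"
    and z: "z \<in> ball 0 1"
  shows "h (cnj z) = cnj (h z) \<and> g (cnj z) = cnj (g z)"
proof -
  define H where "H = cnj \<circ> h \<circ> cnj"
  define G where "G = cnj \<circ> g \<circ> cnj"
  have hd: "(h has_field_derivative deriv h x) (at x)" "(g has_field_derivative deriv g x) (at x)"
    if "x \<in> ball 0 1" for x
    using holomorphic_derivI[OF hol(1) open_ball that] holomorphic_derivI[OF hol(2) open_ball that] by auto
  have Hd: "(H has_field_derivative cnj (deriv h (cnj x))) (at x)"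
    "(G has_field_derivative cnj (deriv g (cnj x))) (at x)" if "x \<in> ball 0 1" for x
    unfolding H_def G_def using that hd[of "cnj x"]
    by (auto intro!: has_field_derivative_cnj_cnj)
  have HG: "H x - G x = h x - g x" if "x \<in> ball 0 1" for x
  proof -
    have "cnj x \<in> ball 0 1" using that by simp
    then have "h (cnj x) - g (cnj x) = gen_koebe a (cnj x)" using hk by blast
    then have "H x - G x = cnj (gen_koebe a (cnj x))" by (simp add: H_def G_def flip: complex_cnj_diff)
    also have "\<dots> = gen_koebe a x" using koebe_sym[of x a] that by simp
    finally show ?thesis using hk that by simp
  qed
  define D where "D x = H x - h x" for x
  have D0: "\<And>x::complex. x \<in> ball 0 1 \<Longrightarrow> (D has_field_derivative 0) (at x within ball 0 1)"
  proof -
    fix x :: complex assume x: "x \<in> ball 0 1"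
    have cx: "cnj x \<in> ball 0 1" using x by simp
    define Dp where "Dp = cnj (deriv h (cnj x)) - deriv h x"
    have d1: "(D has_field_derivative Dp) (at x)" unfolding D_def[abs_def] Dp_def
      using x by (intro derivative_intros Hd hd)
    have d2: "((\<lambda>y. G y - g y) has_field_derivative cnj (deriv g (cnj x)) - deriv g x) (at x)"
      using x by (intro derivative_intros Hd hd)
    have d3: "(D has_field_derivative cnj (deriv g (cnj x)) - deriv g x) (at x)"
      by (rule has_field_derivative_transform_within_open[OF d2 open_ball x])
        (use HG in \<open>auto simp: D_def algebra_simps\<close>)
    have "Dp = cnj (deriv g (cnj x)) - deriv g x" using DERIV_unique[OF d1 d3] .
    also have "\<dots> = complex_of_real lambda * x * Dp" using dil x cx by (simp add: Dp_def algebra_simps)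
    finally have "Dp * (1 - complex_of_real lambda * x) = 0" by (simp add: algebra_simps)
    moreover have "complex_of_real lambda * x \<noteq> 1"
    proof
      assume "complex_of_real lambda * x = 1"
      then have "cmod (complex_of_real lambda * x) = 1" by simp
      moreover have "lambda * cmod x \<le> cmod x" using lam by (simp add: mult_left_le_one_le)
      ultimately show False using x lam by (simp add: norm_mult)
    qed
    ultimately have "Dp = 0" by simp
    then show "(D has_field_derivative 0) (at x within ball 0 1)" using d1 has_field_derivative_at_within by blast
  qed
  obtain c where c: "\<forall>x\<in>ball 0 1. D x = c" using has_field_derivative_zero_constant[OF convex_ball D0] by blast
  have "D 0 = 0" using h0 by (simp add: D_def H_def)
  then have "D z = 0" using c z by (metis centre_in_ball zero_less_one)
  then have hz: "h (cnj z) = cnj (h z)" by (simp add: D_def H_def complex_eq_iff)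
  have cz: "cnj z \<in> ball 0 1" using z by simp
  have "h (cnj z) - g (cnj z) = gen_koebe a (cnj z)" using hk cz by blast
  then have "g (cnj z) = h (cnj z) - gen_koebe a (cnj z)" by (simp add: algebra_simps)
  also have "\<dots> = cnj (h z - gen_koebe a z)" using hz koebe_sym[of z a] z by simp
  also have "\<dots> = cnj (g z)"
  proof -
    have e: "gen_koebe a z = h z - g z" using hk z by simp
    show ?thesis unfolding e by simp
  qed
  finally show ?thesis using hz by simp
qed


lemma not_univalent:
  fixes a lambda :: real and h g :: "complex \<Rightarrow> complex"
  assumes a: "\<bar>a\<bar> > 2" and lam: "0 \<le> lambda" "lambda < 1"
    and hol: "h holomorphic_on ball 0 1" "g holomorphic_on ball 0 1"
    and h0: "h 0 = 0"
    and hk: "\<forall>z\<in>ball 0 1. h z - g z = gen_koebe a z"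
    and dil: "\<forall>z\<in>ball 0 1. deriv g z = complex_of_real lambda * z * deriv h z"
  shows "\<not> inj_on (\<lambda>z. h z + cnj (g z)) (ball 0 1)"
proof
  assume inj: "inj_on (\<lambda>z. h z + cnj (g z)) (ball 0 1)"
  have anz: "a \<noteq> 0" using a by auto
  define s0 where "s0 = \<i> * complex_of_real (pi / a)"
  have ims: "Im s0 = pi / a" by (simp add: s0_def)
  have "pi / \<bar>a\<bar> < pi / 2" using a pi_gt_zero by (intro divide_strict_left_mono) auto
  then have "\<bar>pi / a\<bar> < pi / 2" by (simp add: abs_div)
  then have ims2: "\<bar>Im s0\<bar> < pi / 2" using ims by simp
  define v where "v = exp s0"
  have "cos (Im s0) > 0" using ims2 by (intro cos_gt_zero_pi) auto
  then have vp: "Re v > 0" by (simp add: v_def Re_exp)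
  have "sin (pi / a) \<noteq> 0"
  proof (cases "a > 0")
    case True
    then have "0 < pi / a" "pi / a < pi" using a by (auto simp: divide_less_eq)
    then show ?thesis using sin_gt_zero by force
  next
    case False
    then have "-a > 1" using a by linarith
    then have "pi / (-a) < pi / 1" using pi_gt_zero by (intro divide_strict_left_mono) auto
    then have p2: "pi / (-a) < pi" by (metis div_by_1)
    have p1: "0 < pi / (-a)" using \<open>-a > 1\<close> pi_gt_zero by (intro divide_pos_pos) auto
    have "sin (pi / (-a)) > 0" by (rule sin_gt_zero[OF p1 p2])
    then show ?thesis by simp
  qed
  then have imv: "Im v \<noteq> 0" by (simp add: v_def Im_exp ims)
  define z0 where "z0 = CC v"
  have z0b: "z0 \<in> ball 0 1" using CC_props(1)[OF vp] by (simp add: z0_def)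
  have wz: "WW z0 = v" using CC_props(2)[OF vp] by (simp add: z0_def)
  have "Ln v = s0" unfolding v_def using ims2 by (intro Ln_exp) auto
  then have "gen_koebe a z0 = EE a s0" using koebe_EE[of z0 a] z0b wz by simp
  also have "EE a s0 = (exp (\<i> * complex_of_real pi) - 1) / (2 * complex_of_real a)"
  proof -
    have "complex_of_real a * s0 = \<i> * complex_of_real pi" using anz
      by (simp add: s0_def field_simps)
    then show ?thesis using anz by (simp add: EE_def)
  qed
  also have "\<dots> = - 1 / complex_of_real a" using anz by (simp add: field_simps)
  finally have imk: "Im (gen_koebe a z0) = 0" by simp
  have imz: "Im z0 \<noteq> 0"
  proof
    assume "Im z0 = 0"
    then have "z0 \<in> \<real>" by (simp add: complex_is_Real_iff)
    then have "WW z0 \<in> \<real>" unfolding WW_def by (auto intro: Reals_divide Reals_add Reals_diff)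
    then show False using wz imv by (simp add: complex_is_Real_iff)
  qed
  have cz: "cnj z0 \<in> ball 0 1" using z0b by simp
  have sym: "h (cnj z0) = cnj (h z0)" "g (cnj z0) = cnj (g z0)"
    using hg_sym[OF lam hol h0 hk dil z0b] by auto
  have "Im (h z0 - g z0) = 0" using imk bspec[OF hk z0b] by simp
  then have kz: "Im (h z0) - Im (g z0) = 0" by simp
  have "h (cnj z0) + cnj (g (cnj z0)) = h z0 + cnj (g z0)"
    using sym kz by (simp add: complex_eq_iff)
  then have "cnj z0 = z0" using inj cz z0b unfolding inj_on_def by blast
  then show False using imz by (simp add: complex_eq_iff)
qed

theorem theorem2p1:
  fixes a lambda :: real and h g :: "complex \<Rightarrow> complex"
  assumes "0 \<le> lambda" and "lambda < 1"
    and "h holomorphic_on ball 0 1" and "g holomorphic_on ball 0 1"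
    and "h 0 = 0" and "g 0 = 0"
    and "\<forall>z\<in>ball 0 1. h z - g z = gen_koebe a z"
    and "\<forall>z\<in>ball 0 1. deriv h z \<noteq> 0 \<and> deriv g z / deriv h z = complex_of_real lambda * z"
  shows "inj_on (\<lambda>z. h z + cnj (g z)) (ball 0 1) \<longleftrightarrow> (-2 \<le> a \<and> a \<le> 2)"
proof -
  have dil: "\<forall>z\<in>ball 0 1. deriv g z = complex_of_real lambda * z * deriv h z"
    using assms(8) by (simp add: divide_eq_eq)
  show ?thesis
  proof
    assume "inj_on (\<lambda>z. h z + cnj (g z)) (ball 0 1)"
    then have "\<not> \<bar>a\<bar> > 2" using not_univalent[OF _ assms(1-5,7) dil] by blast
    then show "-2 \<le> a \<and> a \<le> 2" by linarith
  next
    assume "-2 \<le> a \<and> a \<le> 2"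
    then have "\<bar>a\<bar> \<le> 2" by linarith
    then show "inj_on (\<lambda>z. h z + cnj (g z)) (ball 0 1)"
      using koebe_univalent[OF _ assms(1-4,7) dil] by blast
  qed
qed

end
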